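(* For every Borel measure $\mu$ on $\mathbb R$ (with its usual topology), the restriction of $\mu$ to the open subsets of the Sorgenfrey line $\mathbb R_\ell$ is a continuous valuation.
   Context: The Sorgenfrey line $\mathbb R_\ell$ is $\mathbb R$ with the topology generated by the half-open intervals $[a,b[$, $a<b$; its open sets are Borel subsets of $\mathbb R$. A continuous valuation on a space $X$ is a map $\nu:\mathcal OX\to[0,\infty]$ with $\nu(\emptyset)=0$, monotone, modular, and preserving suprema of directed families of open sets. *)

theory Defs
  imports "HOL-Analysis.Analysis"
begin

definition sorgenfrey :: "real topology" where
  "sorgenfrey = topology_generated_by {{a..<b} | a b. a < b}"

definition directed_family :: "'a set set \<Rightarrow> bool" where
  "directed_family D \<longleftrightarrow> D \<noteq> {} \<and> (\<forall>U\<in>D. \<forall>V\<in>D. \<exists>W\<in>D. U \<subseteq> W \<and> V \<subseteq> W)"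

text \<open>Continuous valuation on a topological space X: a map from the open sets
  to [0,\<infinity>] (values outside the open sets are irrelevant).\<close>
definition continuous_valuation :: "'a topology \<Rightarrow> ('a set \<Rightarrow> ennreal) \<Rightarrow> bool" where
  "continuous_valuation X \<nu> \<longleftrightarrow>
     \<nu> {} = 0 \<and>
     (\<forall>U V. openin X U \<and> openin X V \<and> U \<subseteq> V \<longrightarrow> \<nu> U \<le> \<nu> V) \<and>
     (\<forall>U V. openin X U \<and> openin X V \<longrightarrow> \<nu> U + \<nu> V = \<nu> (U \<union> V) + \<nu> (U \<inter> V)) \<and>
     (\<forall>D. (\<forall>U\<in>D. openin X U) \<and> directed_family D \<longrightarrow> \<nu> (\<Union>D) = (SUP U\<in>D. \<nu> U))"

end

theory Submission
  imports Defs
begin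

definition sg_open :: "real set \<Rightarrow> bool" where
  "sg_open U \<longleftrightarrow> (\<forall>x\<in>U. \<exists>b>x. {x..<b} \<subseteq> U)"

lemma openin_sg: "openin sorgenfrey U \<Longrightarrow> sg_open U"
  unfolding sorgenfrey_def openin_topology_generated_by_iff
proof (induction rule: generate_topology_on.induct)
  case Empty
  then show ?case by (auto simp: sg_open_def)
next
  case (Int a b)
  show ?case unfolding sg_open_def
  proof
    fix x assume "x \<in> a \<inter> b"
    then obtain b1 b2 where "b1 > x" "{x..<b1} \<subseteq> a" "b2 > x" "{x..<b2} \<subseteq> b"
      using Int.IH unfolding sg_open_def by blast
    then show "\<exists>c>x. {x..<c} \<subseteq> a \<inter> b"
      by (intro exI[of _ "min b1 b2"]) auto
  qed
next
  case (UN K)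
  then show ?case unfolding sg_open_def by (meson UnionE UnionI subsetD subsetI)
next
  case (Basis s)
  then show ?case unfolding sg_open_def by auto
qed

lemma countable_gap:
  fixes C W :: "real set"
  assumes h: "\<forall>x\<in>C. \<exists>b>x. {x<..<b} \<subseteq> W" and d: "C \<inter> W = {}"
  shows "countable C"
proof -
  obtain b where b: "\<And>x. x \<in> C \<Longrightarrow> b x > x \<and> {x<..<b x} \<subseteq> W"
    using h by metis
  define q where "q x = (SOME r. r \<in> \<rat> \<and> x < r \<and> r < b x)" for x
  have q: "q x \<in> \<rat> \<and> x < q x \<and> q x < b x" if "x \<in> C" for x
    unfolding q_def by (rule someI_ex) (use b[OF that] Rats_dense_in_real in blast)
  have lt: "q x < q y" if "x \<in> C" "y \<in> C" "x < y" for x y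
  proof -
    have "y \<notin> {x<..<b x}" using b[OF that(1)] d that(2) by blast
    then have "b x \<le> y" using that(3) by auto
    then show ?thesis using q[OF that(1)] q[OF that(2)] by linarith
  qed
  have "inj_on q C"
    unfolding inj_on_def
  proof (intro ballI impI)
    fix x y assume "x \<in> C" "y \<in> C" "q x = q y"
    then show "x = y" using lt[of x y] lt[of y x] by (cases "x < y"; cases "y < x") auto
  qed
  moreover have "countable (q ` C)"
    using q countable_rat by (metis countable_subset image_subset_iff)
  ultimately show ?thesis using countable_image_inj_on by blast
qed

lemma countable_borel: "countable (C::real set) \<Longrightarrow> C \<in> sets borel"
proof -
  assume c: "countable C"
  have "(\<Union>x\<in>C. {x}) \<in> sets borel"
    by (rule sets.countable_UN''[OF c]) auto
  then show ?thesis by simp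
qed

lemma sg_open_borel:
  assumes "sg_open U" shows "U \<in> sets borel"
proof -
  have "\<forall>x\<in>U - interior U. \<exists>b>x. {x<..<b} \<subseteq> interior U"
  proof
    fix x assume "x \<in> U - interior U"
    then obtain b where "b > x" "{x..<b} \<subseteq> U" using assms sg_open_def by blast
    then have "{x<..<b} \<subseteq> U" by auto
    then have "{x<..<b} \<subseteq> interior U" by (simp add: interior_maximal)
    then show "\<exists>b>x. {x<..<b} \<subseteq> interior U" using \<open>b > x\<close> by blast
  qed
  then have "countable (U - interior U)" by (rule countable_gap) auto
  then have "U - interior U \<in> sets borel" by (rule countable_borel)
  moreover have "interior U \<in> sets borel" by auto
  ultimately have "(U - interior U) \<union> interior U \<in> sets borel" by (rule sets.Un)
  moreover have "(U - interior U) \<union> interior U = U" using interior_subset by blast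
  ultimately show ?thesis by simp
qed

lemma sg_open_Union: "(\<And>U. U \<in> D \<Longrightarrow> sg_open U) \<Longrightarrow> sg_open (\<Union>D)"
  unfolding sg_open_def by (meson UnionE UnionI subsetD subsetI)

lemma countable_subcover:
  assumes D: "\<And>U. U \<in> D \<Longrightarrow> sg_open U"
  obtains D0 where "D0 \<subseteq> D" "countable D0" "\<Union>D0 = \<Union>D"
proof -
  define W where "W = (\<Union>V\<in>D. interior V)"
  obtain F where F: "F \<subseteq> interior ` D" "countable F" "\<Union>F = \<Union>(interior ` D)"
    using Lindelof[of "interior ` D"] by auto
  define D1 where "D1 = (\<lambda>S. SOME V. V \<in> D \<and> S = interior V) ` F"
  have D1: "D1 \<subseteq> D" "countable D1" "W \<subseteq> \<Union>D1"
  proof -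
    have s: "(SOME V. V \<in> D \<and> S = interior V) \<in> D \<and> S = interior (SOME V. V \<in> D \<and> S = interior V)"
      if "S \<in> F" for S
      by (rule someI_ex) (use that F(1) in blast)
    show "D1 \<subseteq> D" using s D1_def by auto
    show "countable D1" using F(2) D1_def by auto
    show "W \<subseteq> \<Union>D1"
    proof
      fix x assume "x \<in> W"
      then obtain S where "S \<in> F" "x \<in> S" using F(3) W_def by auto
      then show "x \<in> \<Union>D1" using s[of S] interior_subset D1_def by blast
    qed
  qed
  define C where "C = \<Union>D - W"
  have "\<forall>x\<in>C. \<exists>b>x. {x<..<b} \<subseteq> W"
  proof
    fix x assume "x \<in> C"
    then obtain V where V: "V \<in> D" "x \<in> V" using C_def by auto
    then obtain b where "b > x" "{x..<b} \<subseteq> V" using D sg_open_def by blast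
    then have "{x<..<b} \<subseteq> V" by auto
    then have "{x<..<b} \<subseteq> interior V" by (simp add: interior_maximal)
    then show "\<exists>b>x. {x<..<b} \<subseteq> W" using \<open>b > x\<close> V W_def by blast
  qed
  then have cC: "countable C" by (rule countable_gap) (auto simp: C_def)
  define D2 where "D2 = (\<lambda>x. SOME V. V \<in> D \<and> x \<in> V) ` C"
  have s2: "(SOME V. V \<in> D \<and> x \<in> V) \<in> D \<and> x \<in> (SOME V. V \<in> D \<and> x \<in> V)" if "x \<in> C" for x
    by (rule someI_ex) (use that C_def in blast)
  have "D1 \<union> D2 \<subseteq> D" using D1 s2 D2_def by auto
  moreover have "countable (D1 \<union> D2)" using D1 cC D2_def by auto
  moreover have "\<Union>(D1 \<union> D2) = \<Union>D"
  proof
    show "\<Union>(D1 \<union> D2) \<subseteq> \<Union>D" using calculation(1) by blast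
    show "\<Union>D \<subseteq> \<Union>(D1 \<union> D2)"
    proof
      fix x assume "x \<in> \<Union>D"
      show "x \<in> \<Union>(D1 \<union> D2)"
      proof (cases "x \<in> W")
        case True then show ?thesis using D1(3) by blast
      next
        case False
        then have "x \<in> C" using \<open>x \<in> \<Union>D\<close> C_def by auto
        then show ?thesis using s2 D2_def by blast
      qed
    qed
  qed
  ultimately show ?thesis using that by blast
qed

theorem proposition4p7:
  fixes \<mu> :: "real measure"
  assumes "sets \<mu> = sets borel"
  shows "continuous_valuation sorgenfrey (\<lambda>U. emeasure \<mu> U)"
proof -
  have meas: "U \<in> sets \<mu>" if "openin sorgenfrey U" for U
    using assms sg_open_borel openin_sg that by auto
  have dir: "emeasure \<mu> (\<Union>D) = (SUP U\<in>D. emeasure \<mu> U)"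
    if D: "\<forall>U\<in>D. openin sorgenfrey U" "directed_family D" for D
  proof -
    have sg: "\<And>U. U \<in> D \<Longrightarrow> sg_open U" using D openin_sg by blast
    have mU: "\<Union>D \<in> sets \<mu>" using assms sg_open_borel sg_open_Union[OF sg] by auto
    have le: "(SUP U\<in>D. emeasure \<mu> U) \<le> emeasure \<mu> (\<Union>D)"
      by (rule SUP_least) (use mU in \<open>auto intro!: emeasure_mono\<close>)
    obtain D0 where D0: "D0 \<subseteq> D" "countable D0" "\<Union>D0 = \<Union>D"
      using countable_subcover[OF sg] by blast
    have ne: "D \<noteq> {}" and dd: "\<And>U V. U \<in> D \<Longrightarrow> V \<in> D \<Longrightarrow> \<exists>W\<in>D. U \<subseteq> W \<and> V \<subseteq> W"
      using D(2) unfolding directed_family_def by blast+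
    show ?thesis
    proof (cases "D0 = {}")
      case True
      then have "\<Union>D = {}" using D0 by simp
      then have e0: "emeasure \<mu> (\<Union>D) = 0" by (simp only: emeasure_empty)
      show ?thesis by (rule order.antisym[OF _ le]) (simp only: e0 zero_le)
    next
      case False
      define g where "g = from_nat_into D0"
      have g: "g n \<in> D" for n
        unfolding g_def using from_nat_into[OF False, of n] D0(1) by blast
      have rg: "\<Union>(range g) = \<Union>D0" 
        unfolding g_def using range_from_nat_into[OF False D0(2)] by simp
      define step where "step W V = (SOME X. X \<in> D \<and> W \<subseteq> X \<and> V \<subseteq> X)" for W V
      have st: "step W V \<in> D \<and> W \<subseteq> step W V \<and> V \<subseteq> step W V" if "W \<in> D" "V \<in> D" for W V
        unfolding step_def by (rule someI_ex) (use dd[OF that] in blast)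
      define H where "H = rec_nat (g 0) (\<lambda>n W. step W (g (Suc n)))"
      have H0: "H 0 = g 0" and HS: "H (Suc n) = step (H n) (g (Suc n))" for n
        by (simp_all add: H_def)
      have HD: "H n \<in> D \<and> g n \<subseteq> H n" for n
      proof (induction n)
        case 0 then show ?case using H0 g by simp
      next
        case (Suc n) then show ?case using HS st g by metis
      qed
      have inc: "incseq H"
        by (rule incseq_SucI) (metis HS HD st g)
      have UH: "\<Union>(range H) = \<Union>D"
      proof
        show "\<Union>(range H) \<subseteq> \<Union>D" using HD by blast
        show "\<Union>D \<subseteq> \<Union>(range H)"
        proof
          fix x assume "x \<in> \<Union>D"
          then have "x \<in> \<Union>(range g)" using rg D0(3) by simp
          then obtain n where "x \<in> g n" by blast
          then show "x \<in> \<Union>(range H)" using HD[of n] by blast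
        qed
      qed
      have "range H \<subseteq> sets \<mu>" using HD D meas by blast
      then have "(SUP n. emeasure \<mu> (H n)) = emeasure \<mu> (\<Union>D)"
        using SUP_emeasure_incseq[OF _ inc] UH by simp
      moreover have "(SUP n. emeasure \<mu> (H n)) \<le> (SUP U\<in>D. emeasure \<mu> U)"
        by (rule SUP_least) (use HD in \<open>auto intro: SUP_upper\<close>)
      ultimately show ?thesis using le by simp
    qed
  qed
  show ?thesis
    unfolding continuous_valuation_def
    using meas dir by (auto intro!: emeasure_mono emeasure_Un_Int)
qed

end
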